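(* Fix positive integers $m_1,m_2,m_3$. Let $A_1$ be an $m_1\times m_1$ coloring matrix, $A_2$ an $m_1\times m_2$ matrix with entries in $\{0,1\}$, and $B=(b_{ij})$ an $m_3\times m_2$ matrix with entries in $\{0,1\}$. Let $$A=\left[\begin{array}{c|c}A_1&A_2\\\hline0&0\end{array}\right],\qquad A'=\left[\begin{array}{c|c|c}A_1&A_2&0\\\hline0&0&0\\\hline0&B&0\end{array}\right],$$ where the $0$'s are zero blocks of the sizes making $A$ an $(m_1+m_2)\times(m_1+m_2)$ matrix and $A'$ an $(m_1+m_2+m_3)\times(m_1+m_2+m_3)$ matrix. Then $$F_{A'}(x)=F_A(x)+x\sum_{i=1}^{m_3}\frac{1}{1-x\sum_{j=1}^{m_2}b_{ij}}.$$ In particular, for $1\le i\le m_1+m_2$ we have $t^{(i)}_{A'}(n)=t^{(i)}_A(n)$ for all $n\ge1$, and for $m_1+m_2<i\le m_1+m_2+m_3$ we have $$t^{(i)}_{A'}(n)=\Big(\sum_{j=1}^{m_2}b_{i-m_1-m_2,j}\Big)^{n-1}$$ for all $n\ge1$.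
   Context: A plane tree is an unlabeled rooted tree in which the children of every vertex are linearly ordered. A coloring matrix is a square matrix $A=(a_{ij})$ with entries in $\{0,1\}$. An $A$-coloring of a plane tree assigns to each vertex a color (an index of a row of $A$) such that whenever a vertex of color $j$ is a child of a vertex of color $i$, $a_{ij}=1$. Let $t_A(n)$ be the number of pairs (plane tree with $n$ vertices, $A$-coloring of it), $t_A^{(i)}(n)$ the number of those with root color $i$, and $F_A(x)=\sum_{n\ge1}t_A(n)x^n$. *)

theory Defs
  imports "HOL-Computational_Algebra.Formal_Power_Series"
begin

text \<open>A plane tree together with a coloring of its vertices is represented as a
  colored plane tree: a node carries its color and the ordered list of its subtrees.
  Colors are 0-based: a coloring matrix of size m is a function
  nat \<Rightarrow> nat \<Rightarrow> nat whose entries at indices below m are in {0,1};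
  colors are the numbers below m.\<close>

datatype ctree = CNode nat "ctree list"

fun root_color :: "ctree \<Rightarrow> nat" where
  "root_color (CNode c ts) = c"

fun csize :: "ctree \<Rightarrow> nat" where
  "csize (CNode c ts) = Suc (sum_list (map csize ts))"

fun valid_coloring :: "nat \<Rightarrow> (nat \<Rightarrow> nat \<Rightarrow> nat) \<Rightarrow> ctree \<Rightarrow> bool" where
  "valid_coloring m A (CNode c ts) =
     (c < m \<and> (\<forall>t\<in>set ts. A c (root_color t) = 1 \<and> valid_coloring m A t))"

definition is_coloring_matrix :: "nat \<Rightarrow> (nat \<Rightarrow> nat \<Rightarrow> nat) \<Rightarrow> bool" where
  "is_coloring_matrix m A \<longleftrightarrow> (\<forall>i<m. \<forall>j<m. A i j \<in> {0,1})"

definition tA :: "nat \<Rightarrow> (nat \<Rightarrow> nat \<Rightarrow> nat) \<Rightarrow> nat \<Rightarrow> nat" where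
  "tA m A n = card {T. valid_coloring m A T \<and> csize T = n}"

definition tAi :: "nat \<Rightarrow> (nat \<Rightarrow> nat \<Rightarrow> nat) \<Rightarrow> nat \<Rightarrow> nat \<Rightarrow> nat" where
  "tAi m A i n = card {T. valid_coloring m A T \<and> csize T = n \<and> root_color T = i}"

definition FA :: "nat \<Rightarrow> (nat \<Rightarrow> nat \<Rightarrow> nat) \<Rightarrow> real fps" where
  "FA m A = Abs_fps (\<lambda>n. if n = 0 then 0 else real (tA m A n))"

definition blockA :: "nat \<Rightarrow> nat \<Rightarrow> (nat \<Rightarrow> nat \<Rightarrow> nat) \<Rightarrow> (nat \<Rightarrow> nat \<Rightarrow> nat)
    \<Rightarrow> nat \<Rightarrow> nat \<Rightarrow> nat" where
  "blockA m1 m2 A1 A2 i j =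
     (if i < m1 \<and> j < m1 then A1 i j
      else if i < m1 \<and> m1 \<le> j \<and> j < m1 + m2 then A2 i (j - m1)
      else 0)"

definition blockA' :: "nat \<Rightarrow> nat \<Rightarrow> nat \<Rightarrow> (nat \<Rightarrow> nat \<Rightarrow> nat) \<Rightarrow> (nat \<Rightarrow> nat \<Rightarrow> nat)
    \<Rightarrow> (nat \<Rightarrow> nat \<Rightarrow> nat) \<Rightarrow> nat \<Rightarrow> nat \<Rightarrow> nat" where
  "blockA' m1 m2 m3 A1 A2 B i j =
     (if i < m1 \<and> j < m1 then A1 i j
      else if i < m1 \<and> m1 \<le> j \<and> j < m1 + m2 then A2 i (j - m1)
      else if m1 + m2 \<le> i \<and> i < m1 + m2 + m3 \<and> m1 \<le> j \<and> j < m1 + m2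
        then B (i - m1 - m2) (j - m1)
      else 0)"

end

theory Submission
  imports Defs
begin

fun allc :: "nat \<Rightarrow> ctree \<Rightarrow> bool" where
  "allc m (CNode c ts) = (c < m \<and> (\<forall>t\<in>set ts. allc m t))"

lemma valid_allc: "valid_coloring m A T \<Longrightarrow> allc m T"
  by (induction T) auto

lemma csize_pos: "csize T > 0"
  by (cases T) auto

lemma len_le_sum: "length ts \<le> sum_list (map csize ts)"
proof (induction ts)
  case (Cons t ts) then show ?case using csize_pos[of t] by simp
qed simp

lemma fin_allc: "finite {T. allc m T \<and> csize T \<le> n}"
proof (induction n)
  case 0
  have "csize T \<noteq> 0" for T using csize_pos[of T] by simp
  then have "{T. allc m T \<and> csize T \<le> 0} = {}" by simp
  then show ?case by (metis finite.emptyI)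
next
  case (Suc n)
  let ?S = "{T. allc m T \<and> csize T \<le> n}"
  have "{T. allc m T \<and> csize T \<le> Suc n} \<subseteq>
     (\<lambda>(c,ts). CNode c ts) ` ({..<m} \<times> {ts. set ts \<subseteq> ?S \<and> length ts \<le> n})"
  proof
    fix T assume T: "T \<in> {T. allc m T \<and> csize T \<le> Suc n}"
    obtain c ts where Tc: "T = CNode c ts" by (cases T)
    have s: "sum_list (map csize ts) \<le> n" using T Tc by simp
    have "set ts \<subseteq> ?S"
    proof
      fix t assume t: "t \<in> set ts"
      have "csize t \<le> sum_list (map csize ts)"
        using t by (simp add: member_le_sum_list)
      then show "t \<in> ?S" using t T Tc s by auto
    qed
    moreover have "length ts \<le> n" using len_le_sum[of ts] s by simp
    ultimately show "T \<in> (\<lambda>(c,ts). CNode c ts) ` ({..<m} \<times> {ts. set ts \<subseteq> ?S \<and> length ts \<le> n})"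
      using T Tc by force
  qed
  moreover have "finite ({..<m} \<times> {ts. set ts \<subseteq> ?S \<and> length ts \<le> n})"
    using Suc finite_lists_length_le by blast
  ultimately show ?case by (meson finite_imageI finite_subset)
qed

lemma fin_valid: "finite {T. valid_coloring m A T \<and> csize T = n \<and> P T}"
  by (rule finite_subset[OF _ fin_allc[of m n]]) (auto dest: valid_allc)

lemma tA_sum: "tA m A n = (\<Sum>i<m. tAi m A i n)"
proof -
  have "{T. valid_coloring m A T \<and> csize T = n} =
     (\<Union>i<m. {T. valid_coloring m A T \<and> csize T = n \<and> root_color T = i})"
    by auto (metis root_color.simps valid_coloring.simps ctree.exhaust)
  then have "tA m A n = card (\<Union>i<m. {T. valid_coloring m A T \<and> csize T = n \<and> root_color T = i})"
    by (simp add: tA_def)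
  also have "\<dots> = (\<Sum>i<m. tAi m A i n)"
    unfolding tAi_def by (subst card_UN_disjoint) (auto intro: fin_valid)
  finally show ?thesis .
qed

lemma sum_split: "(\<Sum>i<a+b. f i) = (\<Sum>i<a. f i) + (\<Sum>i<b. f (a+i :: nat))"
  by (induction b) (auto simp: add.assoc)

lemma geom: "inverse (1 - fps_X * fps_const (c::real)) = Abs_fps (\<lambda>n. c ^ n)"
proof (rule fps_inverse_unique, rule fps_ext)
  fix n
  show "fps_nth ((1 - fps_X * fps_const c) * Abs_fps (\<lambda>n. c ^ n)) n = fps_nth (1::real fps) n"
  proof -
    have e: "(1 - fps_X * fps_const c) * Abs_fps (\<lambda>n. c ^ n)
       = Abs_fps (\<lambda>n. c ^ n) - fps_X * (fps_const c * Abs_fps (\<lambda>n. c ^ n))"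
      by (simp add: algebra_simps)
    show ?thesis unfolding e
      by (cases n) (simp_all add: fps_mult_left_const_nth)
  qed
qed


lemma same_row:
  assumes "c < m1 + m2"
  shows "blockA' m1 m2 m3 A1 A2 B c j = blockA m1 m2 A1 A2 c j"
  using assms unfolding blockA'_def blockA_def by auto

lemma blockA_one: "blockA m1 m2 A1 A2 c j = 1 \<Longrightarrow> j < m1 + m2 \<and> c < m1"
  unfolding blockA_def by (auto split: if_splits)

lemma same_valid:
  "root_color T < m1 + m2 \<Longrightarrow>
   valid_coloring (m1 + m2 + m3) (blockA' m1 m2 m3 A1 A2 B) T =
   valid_coloring (m1 + m2) (blockA m1 m2 A1 A2) T"
proof (induction T)
  case (CNode c ts)
  then have c: "c < m1 + m2" by simp
  have "(blockA' m1 m2 m3 A1 A2 B c (root_color t) = 1 \<and> valid_coloring (m1 + m2 + m3) (blockA' m1 m2 m3 A1 A2 B) t)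
     = (blockA m1 m2 A1 A2 c (root_color t) = 1 \<and> valid_coloring (m1 + m2) (blockA m1 m2 A1 A2) t)"
    if t: "t \<in> set ts" for t
    using same_row[OF c] blockA_one CNode.IH[OF t] by metis
  then show ?case using c by auto
qed

lemma valid_root: "valid_coloring m A T \<Longrightarrow> root_color T < m"
  by (cases T) auto

lemma sum_ones: "(\<And>t. t \<in> set ts \<Longrightarrow> f t = (1::nat)) \<Longrightarrow> sum_list (map f ts) = length ts"
  by (induction ts) auto

lemma leaf_set:
  assumes k: "k < m3" and n: "n \<ge> 1"
  shows "{T. valid_coloring (m1 + m2 + m3) (blockA' m1 m2 m3 A1 A2 B) T \<and> csize T = n
            \<and> root_color T = m1 + m2 + k}
       = (\<lambda>xs. CNode (m1 + m2 + k) (map (\<lambda>j. CNode (j + m1) []) xs)) `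
           {xs. set xs \<subseteq> {j. j < m2 \<and> B k j = 1} \<and> length xs = n - 1}"
    (is "?L = ?f ` ?R")
proof
  show "?L \<subseteq> ?f ` ?R"
  proof
    fix T assume T: "T \<in> ?L"
    obtain c ts where Tc: "T = CNode c ts" by (cases T)
    have c: "c = m1 + m2 + k" using T Tc by simp
    have ch: "t = CNode (root_color t) [] \<and> m1 \<le> root_color t \<and> root_color t < m1 + m2
        \<and> B k (root_color t - m1) = 1" if t: "t \<in> set ts" for t
    proof -
      obtain d us where td: "t = CNode d us" by (cases t)
      have e: "blockA' m1 m2 m3 A1 A2 B c d = 1" and v: "valid_coloring (m1 + m2 + m3) (blockA' m1 m2 m3 A1 A2 B) t"
        using T Tc t td by auto
      have d: "m1 \<le> d \<and> d < m1 + m2 \<and> B k (d - m1) = 1"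
        using e c k unfolding blockA'_def by (auto split: if_splits)
      have "us = []"
      proof (rule ccontr)
        assume "us \<noteq> []"
        then obtain u where "u \<in> set us" by (cases us) auto
        then have "blockA' m1 m2 m3 A1 A2 B d (root_color u) = 1" using v td by auto
        then show False using d unfolding blockA'_def by (auto split: if_splits)
      qed
      then show ?thesis using td d by simp
    qed
    define xs where "xs = map (\<lambda>t. root_color t - m1) ts"
    have ts: "ts = map (\<lambda>j. CNode (j + m1) []) xs"
      unfolding xs_def map_map o_def
      by (rule map_idI[symmetric]) (metis ch le_add_diff_inverse2)
    have len: "length ts = n - 1"
    proof -
      have "csize t = 1" if "t \<in> set ts" for t
        using ch[OF that] by (metis csize.simps list.simps(8) sum_list_simps(1) One_nat_def)
      then have "sum_list (map csize ts) = length ts" by (rule sum_ones)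
      then show ?thesis using T Tc by auto
    qed
    have st: "set xs \<subseteq> {j. j < m2 \<and> B k j = 1}"
      unfolding xs_def using ch by fastforce
    have "T = ?f xs" using Tc c ts by simp
    moreover have "xs \<in> ?R" using st len by (simp add: xs_def)
    ultimately show "T \<in> ?f ` ?R" by blast
  qed
next
  show "?f ` ?R \<subseteq> ?L"
  proof
    fix T assume "T \<in> ?f ` ?R"
    then obtain xs where xs: "set xs \<subseteq> {j. j < m2 \<and> B k j = 1}" "length xs = n - 1"
      and T: "T = ?f xs" by blast
    have "sum_list (map csize (map (\<lambda>j. CNode (j + m1) []) xs)) = length xs"
      by (induction xs) auto
    moreover have "valid_coloring (m1 + m2 + m3) (blockA' m1 m2 m3 A1 A2 B) T"
      using xs k unfolding T blockA'_def by auto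
    ultimately show "T \<in> ?L" using T xs n by simp
  qed
qed


lemma card_B:
  fixes B :: "nat \<Rightarrow> nat \<Rightarrow> nat" and m2 k :: nat
  assumes "\<forall>j<m2. B k j \<in> {0,1}"
  shows "card {j. j < m2 \<and> B k j = 1} = (\<Sum>j<m2. B k j)"
proof -
  have "(\<Sum>j<m2. B k j) = (\<Sum>j<m2. if B k j = 1 then 1 else 0)"
    using assms by (intro sum.cong) auto
  also have "\<dots> = (\<Sum>j\<in>{j. j < m2 \<and> B k j = 1}. 1)"
    proof -
    have "{..<m2} \<inter> {j. B k j = 1} = {j. j < m2 \<and> B k j = 1}" by auto
    then show ?thesis by (subst sum.If_cases) simp_all
  qed
  also have "\<dots> = card {j. j < m2 \<and> B k j = 1}" by simp
  finally show ?thesis by simp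
qed

lemma leaf_card:
  assumes k: "k < m3" and n: "n \<ge> 1" and B: "\<forall>j<m2. B k j \<in> {0,1}"
  shows "tAi (m1 + m2 + m3) (blockA' m1 m2 m3 A1 A2 B) (m1 + m2 + k) n = (\<Sum>j<m2. B k j) ^ (n - 1)"
proof -
  let ?f = "\<lambda>xs. CNode (m1 + m2 + k) (map (\<lambda>j. CNode (j + m1) []) xs)"
  let ?R = "{xs. set xs \<subseteq> {j. j < m2 \<and> B k j = 1} \<and> length xs = n - 1}"
  have inj: "inj_on ?f ?R"
  proof (rule inj_onI)
    fix xs ys assume "?f xs = ?f ys"
    then have "map (\<lambda>j. CNode (j + m1) []) xs = map (\<lambda>j. CNode (j + m1) []) ys" by simp
    moreover have "inj (\<lambda>j. CNode (j + m1) [])" by (rule injI) simp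
    ultimately show "xs = ys" by (simp add: inj_map_eq_map)
  qed
  have "tAi (m1 + m2 + m3) (blockA' m1 m2 m3 A1 A2 B) (m1 + m2 + k) n = card (?f ` ?R)"
    unfolding tAi_def using leaf_set[OF k n] by simp
  also have "\<dots> = card ?R" using inj by (rule card_image)
  also have "\<dots> = card {j. j < m2 \<and> B k j = 1} ^ (n - 1)"
    by (rule card_lists_length_eq) simp
  also have "\<dots> = (\<Sum>j<m2. B k j) ^ (n - 1)" using card_B[of m2 B k, OF B] by simp
  finally show ?thesis .
qed

theorem theorem31:
  fixes m1 m2 m3 :: nat and A1 A2 B :: "nat \<Rightarrow> nat \<Rightarrow> nat"
  assumes "m1 > 0" and "m2 > 0" and "m3 > 0"
    and "\<forall>i<m1. \<forall>j<m1. A1 i j \<in> {0,1}"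
    and "\<forall>i<m1. \<forall>j<m2. A2 i j \<in> {0,1}"
    and "\<forall>i<m3. \<forall>j<m2. B i j \<in> {0,1}"
  shows "FA (m1 + m2 + m3) (blockA' m1 m2 m3 A1 A2 B) =
           FA (m1 + m2) (blockA m1 m2 A1 A2)
           + fps_X * (\<Sum>i<m3. inverse (1 - fps_X * fps_const (real (\<Sum>j<m2. B i j))))
    \<and> (\<forall>i < m1 + m2. \<forall>n \<ge> 1.
           tAi (m1 + m2 + m3) (blockA' m1 m2 m3 A1 A2 B) i n = tAi (m1 + m2) (blockA m1 m2 A1 A2) i n)
    \<and> (\<forall>i. m1 + m2 \<le> i \<and> i < m1 + m2 + m3 \<longrightarrow> (\<forall>n \<ge> 1.
           tAi (m1 + m2 + m3) (blockA' m1 m2 m3 A1 A2 B) i n = (\<Sum>j<m2. B (i - m1 - m2) j) ^ (n - 1)))"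
proof -
  let ?A = "blockA m1 m2 A1 A2"
  let ?A' = "blockA' m1 m2 m3 A1 A2 B"
  have P2: "\<forall>i < m1 + m2. \<forall>n \<ge> 1. tAi (m1 + m2 + m3) ?A' i n = tAi (m1 + m2) ?A i n"
  proof (intro allI impI)
    fix i n :: nat assume i: "i < m1 + m2"
    have "{T. valid_coloring (m1 + m2 + m3) ?A' T \<and> csize T = n \<and> root_color T = i}
        = {T. valid_coloring (m1 + m2) ?A T \<and> csize T = n \<and> root_color T = i}"
      using same_valid[of _ m1 m2 m3 A1 A2 B] i by auto
    then show "tAi (m1 + m2 + m3) ?A' i n = tAi (m1 + m2) ?A i n" unfolding tAi_def by simp
  qed
  have P3: "\<forall>i. m1 + m2 \<le> i \<and> i < m1 + m2 + m3 \<longrightarrow> (\<forall>n \<ge> 1.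
           tAi (m1 + m2 + m3) ?A' i n = (\<Sum>j<m2. B (i - m1 - m2) j) ^ (n - 1))"
  proof (intro allI impI)
    fix i n :: nat assume i: "m1 + m2 \<le> i \<and> i < m1 + m2 + m3" and n: "n \<ge> 1"
    define k where "k = i - m1 - m2"
    have ik: "i = m1 + m2 + k" and k: "k < m3" using i unfolding k_def by auto
    show "tAi (m1 + m2 + m3) ?A' i n = (\<Sum>j<m2. B (i - m1 - m2) j) ^ (n - 1)"
      unfolding ik using leaf_card[OF k n] assms(6) k by simp
  qed
  have P1: "FA (m1 + m2 + m3) ?A' = FA (m1 + m2) ?A
           + fps_X * (\<Sum>i<m3. inverse (1 - fps_X * fps_const (real (\<Sum>j<m2. B i j))))"
  proof (rule fps_ext)
    fix n
    show "fps_nth (FA (m1 + m2 + m3) ?A') n = fps_nth (FA (m1 + m2) ?A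
           + fps_X * (\<Sum>i<m3. inverse (1 - fps_X * fps_const (real (\<Sum>j<m2. B i j))))) n"
    proof (cases "n = 0")
      case True then show ?thesis by (simp add: FA_def)
    next
      case False
      then have n: "n \<ge> 1" by simp
      have "tA (m1 + m2 + m3) ?A' n = (\<Sum>i<m1 + m2. tAi (m1 + m2 + m3) ?A' i n)
           + (\<Sum>k<m3. tAi (m1 + m2 + m3) ?A' (m1 + m2 + k) n)"
        by (simp add: tA_sum sum_split)
      also have "\<dots> = (\<Sum>i<m1 + m2. tAi (m1 + m2) ?A i n) + (\<Sum>k<m3. (\<Sum>j<m2. B k j) ^ (n - 1))"
        using P2 n leaf_card[OF _ n] assms(6) by simp
      also have "\<dots> = tA (m1 + m2) ?A n + (\<Sum>k<m3. (\<Sum>j<m2. B k j) ^ (n - 1))"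
        by (simp add: tA_sum)
      finally have e: "tA (m1 + m2 + m3) ?A' n = tA (m1 + m2) ?A n + (\<Sum>k<m3. (\<Sum>j<m2. B k j) ^ (n - 1))" .
      show ?thesis using False
        by (simp add: FA_def geom fps_sum_nth e)
    qed
  qed
  show ?thesis using P1 P2 P3 by blast
qed

end
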